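(* Let $\mathcal{G}=(\mathcal{V},\mathcal{E})$ be an undirected graph with $n$ nodes and $E$ edges, in which every node has at least one neighbor, with incidence matrix $A\in\mathbb{R}^{n\times E}$. For each node $i$ let $f_i:\mathbb{R}\to\mathbb{R}$ be $M_i$-smooth and $\mu_i$-strongly convex, let $F(\lambda)=\sum_{i=1}^n f_i^*(u_i^TA\lambda)$ for $\lambda\in\mathbb{R}^E$, and let $\lambda^*$ be a minimizer of $F$. Consider the Set-wise Uniform Coordinate Descent (SU-CD) iteration: at each iteration $k$, a node $i$ is sampled uniformly at random from $\{1,\dots,n\}$, then an edge $\ell$ is sampled uniformly at random from $\mathcal{S}_i$, and one sets $\lambda^{k+1}=\lambda^k-\frac{1}{L}\nabla_\ell F(\lambda^k)e_\ell$. Then for every $k$, $$\mathbb{E}[F(\lambda^{k+1})\mid\lambda^k]-F(\lambda^* )\le\left(1-\frac{2\sigma_A}{L\,n\,N_{\max}}\right)\left[F(\lambda^k)-F(\lambda^* )\right].$$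
   Context: The incidence matrix $A$ has, in each column $\ell$ (edge $\ell\equiv(i,j)$), one entry $+1$ and one entry $-1$ in the rows of the endpoints $i,j$ (signs arbitrary), and zeros elsewhere. $u_i\in\mathbb{R}^n$ and $e_\ell\in\mathbb{R}^E$ are standard basis vectors; $f_i^*(y)=\sup_x(yx-f_i(x))$ is the Fenchel conjugate; $\nabla_\ell F(\lambda)=\partial F(\lambda)/\partial\lambda_\ell$. $\mathcal{S}_i$ is the set of edges incident to node $i$, $N_i=|\mathcal{S}_i|$, $N_{\max}=\max_iN_i$. $M_{\max}=\max_iM_i$, $\mu_{\min}=\min_i\mu_i$. Let $\gamma_{\max}$ be the largest eigenvalue and $\gamma^+_{\min}$ the smallest strictly positive eigenvalue of $A^TA$ (equivalently of the graph Laplacian $AA^T$). Then $L=\gamma_{\max}/\mu_{\min}$ (a smoothness constant of $F$) and $\sigma_A=\gamma^+_{\min}/M_{\max}$. The sampling at different iterations is independent. *)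

theory Defs
  imports "HOL-Analysis.Analysis" "HOL-Probability.Probability"
begin

text \<open>Incidence matrix of a graph whose edges (type 'e) have endpoints ends l = (a, b):
  +1 in row a, -1 in row b (orientation arbitrary), zero elsewhere.\<close>
definition incidence :: "('e \<Rightarrow> 'n \<times> 'n) \<Rightarrow> real^'e^'n" where
  "incidence ends = (\<chi> i l. if i = fst (ends l) then 1 else if i = snd (ends l) then -1 else 0)"

definition incident_edges :: "('e \<Rightarrow> 'n \<times> 'n) \<Rightarrow> 'n \<Rightarrow> 'e set" where
  "incident_edges ends i = {l. i = fst (ends l) \<or> i = snd (ends l)}"

definition smooth_with :: "real \<Rightarrow> (real \<Rightarrow> real) \<Rightarrow> bool" where
  "smooth_with M f \<longleftrightarrow> (\<forall>x. f differentiable (at x)) \<and>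
     (\<forall>x y. \<bar>deriv f x - deriv f y\<bar> \<le> M * \<bar>x - y\<bar>)"

definition strongly_convex :: "real \<Rightarrow> (real \<Rightarrow> real) \<Rightarrow> bool" where
  "strongly_convex mu f \<longleftrightarrow> convex_on UNIV (\<lambda>x. f x - mu / 2 * x\<^sup>2)"

definition fenchel_conj :: "(real \<Rightarrow> real) \<Rightarrow> real \<Rightarrow> real" where
  "fenchel_conj f y = (SUP x. y * x - f x)"

definition eigenvalues :: "real^'e^'e \<Rightarrow> real set" where
  "eigenvalues M = {g. \<exists>v. v \<noteq> 0 \<and> M *v v = g *\<^sub>R v}"

definition partial_deriv :: "(real^'e \<Rightarrow> real) \<Rightarrow> real^'e \<Rightarrow> 'e \<Rightarrow> real" where
  "partial_deriv F x l = deriv (\<lambda>t. F (x + t *\<^sub>R axis l 1)) 0"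

end

theory Submission
  imports Defs
begin


context
  fixes f :: "real \<Rightarrow> real" and M mu :: real
  assumes sm: "smooth_with M f" and sc: "strongly_convex mu f" and mupos: "mu > 0"
begin

lemma D_deriv: "(f has_real_derivative deriv f x) (at x)"
  using sm unfolding smooth_with_def by (simp add: DERIV_deriv_iff_real_differentiable)

lemma lip: "\<bar>deriv f x - deriv f y\<bar> \<le> M * \<bar>x - y\<bar>"
  using sm unfolding smooth_with_def by blast

lemma tangent_lower: "f z \<ge> f x + deriv f x * (z - x) + mu / 2 * (z - x)\<^sup>2"
proof -
  have cv: "convex_on UNIV (\<lambda>x. f x - mu / 2 * x\<^sup>2)" using sc unfolding strongly_convex_def .
  have d: "((\<lambda>x. f x - mu / 2 * x\<^sup>2) has_field_derivative (deriv f x - mu * x)) (at x within UNIV)"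
    using D_deriv[of x] by (auto intro!: derivative_eq_intros)
  have "(f z - mu / 2 * z\<^sup>2) - (f x - mu / 2 * x\<^sup>2) \<ge> (deriv f x - mu * x) * (z - x)"
    using convex_on_imp_above_tangent[OF cv _ _ _ d] by auto
  then show ?thesis by (simp add: power2_eq_square algebra_simps)
qed

lemma mono_D: "(deriv f z - deriv f x) * (z - x) \<ge> mu * (z - x)\<^sup>2"
  using tangent_lower[of z x] tangent_lower[of x z]
  by (simp add: power2_eq_square algebra_simps)

lemma M_ge: "M \<ge> mu"
proof -
  have "deriv f 1 - deriv f 0 \<ge> mu" using mono_D[of 1 0] by simp
  moreover have "deriv f 1 - deriv f 0 \<le> M" using lip[of 1 0] by simp
  ultimately show ?thesis by linarith
qed

lemma Mpos: "M > 0" using M_ge mupos by linarith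

lemma tangent_upper: "f z \<le> f x + deriv f x * (z - x) + M / 2 * (z - x)\<^sup>2"
proof -
  define q where "q t = f t - f x - deriv f x * (t - x) - M / 2 * (t - x)\<^sup>2" for t
  have dq: "(q has_real_derivative (deriv f t - deriv f x - M * (t - x))) (at t)" for t
    unfolding q_def using D_deriv[of t] by (auto intro!: derivative_eq_intros simp: power2_eq_square algebra_simps)
  have "q z \<le> 0"
  proof (cases z x rule: linorder_cases)
    case less
    obtain c where c: "z < c" "c < x" "q x - q z = (x - z) * (deriv f c - deriv f x - M * (c - x))"
      using MVT2[OF less, of q "\<lambda>t. deriv f t - deriv f x - M * (t - x)"] dq by blast
    have "\<bar>deriv f c - deriv f x\<bar> \<le> M * (x - c)" using lip[of c x] c by simp
    moreover have "M * (c - x) = - (M * (x - c))" by (simp add: algebra_simps)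
    ultimately have "deriv f c - deriv f x - M * (c - x) \<ge> 0" by linarith
    then have "q x - q z \<ge> 0" using c less by simp
    moreover have "q x = 0" by (simp add: q_def)
    ultimately show ?thesis by linarith
  next
    case equal then show ?thesis by (simp add: q_def)
  next
    case greater
    obtain c where c: "x < c" "c < z" "q z - q x = (z - x) * (deriv f c - deriv f x - M * (c - x))"
      using MVT2[OF greater, of q "\<lambda>t. deriv f t - deriv f x - M * (t - x)"] dq by blast
    have "\<bar>deriv f c - deriv f x\<bar> \<le> M * (c - x)" using lip[of c x] c by simp
    then have "deriv f c - deriv f x - M * (c - x) \<le> 0" by linarith
    then have "q z - q x \<le> 0" using c greater by (simp add: mult_nonneg_nonpos)
    moreover have "q x = 0" by (simp add: q_def)
    ultimately show ?thesis by linarith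
  qed
  then show ?thesis by (simp add: q_def)
qed

lemma D_surj: "\<exists>x. deriv f x = y"
proof -
  have cont: "continuous_on UNIV (deriv f)"
  proof (rule lipschitz_on_continuous_on)
    show "M-lipschitz_on UNIV (deriv f)"
      using lip Mpos by (intro lipschitz_onI) (auto simp: dist_real_def)
  qed
  define t where "t = (\<bar>y\<bar> + \<bar>deriv f 0\<bar>) / mu"
  have t0: "t \<ge> 0" unfolding t_def using mupos by simp
  have mt: "mu * t = \<bar>y\<bar> + \<bar>deriv f 0\<bar>" unfolding t_def using mupos by simp
  have a: "deriv f t - deriv f 0 \<ge> mu * t"
  proof (cases "t = 0")
    case False
    with t0 have "t > 0" by simp
    have "(deriv f t - deriv f 0) * t \<ge> (mu * t) * t" using mono_D[of t 0] by (simp add: power2_eq_square)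
    then show ?thesis using \<open>t > 0\<close> by simp
  qed simp
  have b: "deriv f 0 - deriv f (-t) \<ge> mu * t"
  proof (cases "t = 0")
    case False
    with t0 have "t > 0" by simp
    have "(deriv f 0 - deriv f (-t)) * t \<ge> (mu * t) * t" using mono_D[of 0 "-t"] by (simp add: power2_eq_square)
    then show ?thesis using \<open>t > 0\<close> by simp
  qed simp
  have "deriv f (-t) \<le> y" "y \<le> deriv f t" using a b mt by linarith+
  moreover have "continuous_on {-t..t} (deriv f)" using cont continuous_on_subset by blast
  ultimately show ?thesis using IVT'[of "deriv f" "-t" y t] t0 by auto
qed

definition phi :: "real \<Rightarrow> real" where "phi y = (SOME x. deriv f x = y)"

lemma phi: "deriv f (phi y) = y"
  unfolding phi_def using D_surj[of y] by (rule someI_ex)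

lemma conj_max: "y * t - f t \<le> y * phi y - f (phi y)"
proof -
  have "f t \<ge> f (phi y) + y * (t - phi y) + mu / 2 * (t - phi y)\<^sup>2"
    using tangent_lower[where z=t and x="phi y"] phi[of y] by simp
  moreover have "mu / 2 * (t - phi y)\<^sup>2 \<ge> 0" using mupos by simp
  moreover have "y * (t - phi y) = y * t - y * phi y" by (simp add: right_diff_distrib)
  ultimately show ?thesis by linarith
qed

lemma conj_eq: "fenchel_conj f y = y * phi y - f (phi y)"
  unfolding fenchel_conj_def
  by (rule cSup_eq_maximum) (auto intro: conj_max)

lemma conj_ge: "fenchel_conj f y \<ge> y * t - f t"
  using conj_eq conj_max by simp

lemma conj_upper: "fenchel_conj f y' \<le> fenchel_conj f y + phi y * (y' - y) + (y' - y)\<^sup>2 / (2 * mu)"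
proof -
  define x x' where "x = phi y" and "x' = phi y'"
  have "f x' \<ge> f x + y * (x' - x) + mu / 2 * (x' - x)\<^sup>2"
    using tangent_lower[where z=x' and x=x] phi[of y] by (simp add: x_def)
  moreover have "(y' - y) * (x' - x) - mu / 2 * (x' - x)\<^sup>2 \<le> (y' - y)\<^sup>2 / (2 * mu)"
  proof -
    have "0 \<le> ((y' - y) - mu * (x' - x))\<^sup>2 / (2 * mu)" using mupos by simp
    also have "\<dots> = (y' - y)\<^sup>2 / (2 * mu) - ((y' - y) * (x' - x) - mu / 2 * (x' - x)\<^sup>2)"
      using mupos by (simp add: field_simps power2_eq_square)
    finally show ?thesis by simp
  qed
  ultimately show ?thesis unfolding conj_eq x_def[symmetric] x'_def[symmetric]
    by (simp add: algebra_simps)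
qed

lemma conj_lower:
  assumes "Mb \<ge> M"
  shows "fenchel_conj f y' \<ge> fenchel_conj f y + phi y * (y' - y) + (y' - y)\<^sup>2 / (2 * Mb)"
proof -
  have Mb: "Mb > 0" using assms Mpos by simp
  define x where "x = phi y"
  define d where "d = (y' - y) / Mb"
  have "f (x + d) \<le> f x + y * d + M / 2 * d\<^sup>2"
    using tangent_upper[where z="x + d" and x=x] phi[of y] by (simp add: x_def)
  also have "\<dots> \<le> f x + y * d + Mb / 2 * d\<^sup>2" using assms by (simp add: mult_right_mono)
  finally have "fenchel_conj f y' \<ge> y' * (x + d) - (f x + y * d + Mb / 2 * d\<^sup>2)"
    using conj_ge[of y' "x + d"] by linarith
  moreover have "y' * (x + d) - (f x + y * d + Mb / 2 * d\<^sup>2) = (y * x - f x) + x * (y' - y) + (y' - y)\<^sup>2 / (2 * Mb)"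
    unfolding d_def using Mb by (simp add: field_simps power2_eq_square)
  ultimately show ?thesis unfolding conj_eq x_def by (simp add: algebra_simps)
qed

end


lemma inner_transp: fixes A :: "real^'e^'n"
  shows "(A *v x) \<bullet> y = x \<bullet> (transpose A *v y)"
  by (metis dot_lmul_matrix inner_commute transpose_matrix_vector)

lemma eig_from_ext:
  fixes A :: "real^'e^'n" and W :: "(real^'e) set"
  assumes W: "subspace W" and inv: "\<forall>x\<in>W. transpose A *v (A *v x) \<in> W"
    and s: "s = 1 \<or> s = -1"
    and nn: "\<forall>x\<in>W. 0 \<le> s * ((A *v x) \<bullet> (A *v x) - m * (x \<bullet> x))"
    and v: "v \<in> W" and eq: "(A *v v) \<bullet> (A *v v) = m * (v \<bullet> v)"
  shows "transpose A *v (A *v v) = m *\<^sub>R v"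
proof -
  define w where "w = transpose A *v (A *v v) - m *\<^sub>R v"
  have wW: "w \<in> W" unfolding w_def using W inv v by (simp add: subspace_diff subspace_scale)
  define Q where "Q x = (A *v x) \<bullet> (A *v x) - m * (x \<bullet> x)" for x
  define a where "a = w \<bullet> w"
  define q where "q = s * Q w"
  have q0: "q \<ge> 0" using nn wW unfolding q_def Q_def by blast
  have k1: "(A *v v) \<bullet> (A *v w) = (transpose A *v (A *v v)) \<bullet> w"
    using inner_transp[of A w "A *v v"] by (metis inner_commute)
  have k2: "transpose A *v (A *v v) = w + m *\<^sub>R v" by (simp add: w_def)
  have key: "(A *v v) \<bullet> (A *v w) - m * (v \<bullet> w) = a"
    unfolding a_def k1 k2 by (simp add: inner_add_left inner_add_right inner_commute)
  have expand: "Q (v + t *\<^sub>R w) = Q v + 2 * t * ((A *v v) \<bullet> (A *v w) - m * (v \<bullet> w)) + t\<^sup>2 * Q w" for t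
  proof -
    have e1: "A *v (v + t *\<^sub>R w) = A *v v + t *\<^sub>R (A *v w)"
      by (simp only: matrix_vector_right_distrib matrix_vector_mult_scaleR)
    have e2: "(x + t *\<^sub>R y) \<bullet> (x + t *\<^sub>R y) = x \<bullet> x + 2 * t * (x \<bullet> y) + t\<^sup>2 * (y \<bullet> y)" for x y :: "real^'k"
      by (simp add: inner_add_left inner_add_right inner_commute power2_eq_square algebra_simps)
    show ?thesis unfolding Q_def e1 e2 by (simp add: algebra_simps)
  qed
  have Qv: "Q v = 0" unfolding Q_def using eq by simp
  have ss: "s * s = 1" using s by auto
  have "a = 0"
  proof (rule ccontr)
    assume "a \<noteq> 0"
    then have apos: "a > 0" unfolding a_def by simp
    define t where "t = - s * a / (q + 1)"
    have "v + t *\<^sub>R w \<in> W" using W v wW by (simp add: subspace_add subspace_scale)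
    then have "0 \<le> s * Q (v + t *\<^sub>R w)" using nn unfolding Q_def by blast
    also have "s * Q (v + t *\<^sub>R w) = 2 * t * s * a + t\<^sup>2 * q"
      using expand[of t] Qv key unfolding q_def by (simp add: algebra_simps)
    also have "\<dots> = - 2 * (s * s) * a * a / (q + 1) + (s * s) * a * a * q / ((q + 1) * (q + 1))"
      unfolding t_def using q0 by (simp add: field_simps power2_eq_square)
    also have "\<dots> = - 2 * a * a / (q + 1) + a * a * (q / (q + 1)) / (q + 1)"
      using ss by simp
    also have "\<dots> \<le> - 2 * a * a / (q + 1) + a * a * 1 / (q + 1)"
      using q0 by (intro add_left_mono divide_right_mono mult_left_mono) auto
    also have "\<dots> = - (a * a) / (q + 1)" by (subst add_divide_distrib[symmetric]) simp
    also have "\<dots> < 0" using apos q0 by (intro divide_neg_pos) auto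
    finally show False by simp
  qed
  then have "w = 0" unfolding a_def by simp
  then show ?thesis unfolding w_def by simp
qed

lemma eig_S: fixes A :: "real^'e^'n"
  shows "(transpose A ** A) *v v = transpose A *v (A *v v)"
  by (simp add: matrix_vector_mul_assoc)

lemma finite_eig: fixes A :: "real^'e^'n"
  shows "finite (eigenvalues (transpose A ** A))"
proof -
  let ?E = "eigenvalues (transpose A ** A)"
  define ev where "ev g = (SOME v. v \<noteq> 0 \<and> (transpose A ** A) *v v = g *\<^sub>R v)" for g
  have ev: "ev g \<noteq> 0 \<and> transpose A *v (A *v ev g) = g *\<^sub>R ev g" if "g \<in> ?E" for g
  proof -
    have "\<exists>v. v \<noteq> 0 \<and> (transpose A ** A) *v v = g *\<^sub>R v" using that unfolding eigenvalues_def by blast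
    then show ?thesis unfolding ev_def eig_S[symmetric] by (rule someI_ex)
  qed
  have orth: "ev g1 \<bullet> ev g2 = 0" if "g1 \<in> ?E" "g2 \<in> ?E" "g1 \<noteq> g2" for g1 g2
  proof -
    have "g1 * (ev g1 \<bullet> ev g2) = (transpose A *v (A *v ev g1)) \<bullet> ev g2" using ev[OF that(1)] by simp
    also have "\<dots> = (A *v ev g1) \<bullet> (A *v ev g2)" using inner_transp[of A "ev g2" "A *v ev g1"] by (simp add: inner_commute)
    also have "\<dots> = ev g1 \<bullet> (transpose A *v (A *v ev g2))" by (rule inner_transp)
    also have "\<dots> = g2 * (ev g1 \<bullet> ev g2)" using ev[OF that(2)] by simp
    finally show ?thesis using that(3) by (simp add: algebra_simps)
  qed
  have inj: "inj_on ev ?E"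
  proof
    fix g1 g2 assume "g1 \<in> ?E" "g2 \<in> ?E" "ev g1 = ev g2"
    then show "g1 = g2" using orth[of g1 g2] ev[of g1] by auto
  qed
  have "pairwise orthogonal (ev ` ?E)"
    unfolding pairwise_def orthogonal_def using orth by auto
  moreover have "0 \<notin> ev ` ?E" using ev by auto
  ultimately have "independent (ev ` ?E)" by (rule pairwise_orthogonal_independent)
  then have "finite (ev ` ?E)" using independent_bound by blast
  then show ?thesis using inj finite_imageD by blast
qed

lemma top_eig: fixes A :: "real^'e^'n"
  obtains R where "R \<in> eigenvalues (transpose A ** A)" "\<forall>x. (A *v x) \<bullet> (A *v x) \<le> R * (x \<bullet> x)"
proof -
  let ?Q = "\<lambda>x. (A *v x) \<bullet> (A *v x)"
  have "sphere (0::real^'e) 1 \<noteq> {}" by (simp add: sphere_def) (metis norm_axis_1)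
  moreover have "continuous_on (sphere 0 1) ?Q"
    by (intro continuous_intros linear_continuous_on matrix_vector_mul_linear)
  ultimately obtain v where v: "v \<in> sphere 0 1" "\<forall>y\<in>sphere 0 1. ?Q y \<le> ?Q v"
    using continuous_attains_sup[OF compact_sphere] by blast
  define R where "R = ?Q v"
  have vv: "v \<bullet> v = 1" using v(1) power2_norm_eq_inner[of v] by simp
  have bound: "?Q x \<le> R * (x \<bullet> x)" for x
  proof (cases "x = 0")
    case False
    define u where "u = (1 / norm x) *\<^sub>R x"
    have "u \<in> sphere 0 1" using False by (simp add: u_def)
    then have "?Q u \<le> R" using v R_def by blast
    moreover have "?Q u = ?Q x / (norm x)\<^sup>2"
    proof -
      have "A *v u = (1 / norm x) *\<^sub>R (A *v x)" by (simp only: u_def matrix_vector_mult_scaleR)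
      then show ?thesis by (simp add: power2_eq_square)
    qed
    ultimately have "?Q x / (norm x)\<^sup>2 \<le> R" by simp
    then have "?Q x \<le> R * (norm x)\<^sup>2" using False by (simp add: field_simps)
    then show ?thesis by (simp add: power2_norm_eq_inner)
  qed simp
  have "transpose A *v (A *v v) = R *\<^sub>R v"
    by (rule eig_from_ext[where W=UNIV and s="-1"]) (use bound vv R_def in auto)
  then have "R \<in> eigenvalues (transpose A ** A)"
    unfolding eigenvalues_def eig_S using v(1) by (auto intro!: exI[of _ v])
  with bound show ?thesis using that by blast
qed

lemma pos_eig_bound: fixes A :: "real^'e^'n"
  assumes d: "\<forall>z. A *v z = 0 \<longrightarrow> d \<bullet> z = 0"
  shows "(A *v d) \<bullet> (A *v d) \<ge> Min {g \<in> eigenvalues (transpose A ** A). g > 0} * (d \<bullet> d)"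
proof (cases "d = 0")
  case True then show ?thesis by simp
next
  case False
  let ?Q = "\<lambda>x. (A *v x) \<bullet> (A *v x)"
  define W where "W = {x. \<forall>z. A *v z = 0 \<longrightarrow> x \<bullet> z = 0}"
  have W: "subspace W" unfolding W_def subspace_def by (auto simp: inner_add_left)
  have inv: "\<forall>x\<in>W. transpose A *v (A *v x) \<in> W"
  proof
    fix x assume "x \<in> W"
    show "transpose A *v (A *v x) \<in> W" unfolding W_def
    proof (intro CollectI allI impI)
      fix z assume z: "A *v z = 0"
      have "(transpose A *v (A *v x)) \<bullet> z = (A *v z) \<bullet> (A *v x)"
        using inner_transp[of A z "A *v x"] by (simp only: inner_commute)
      then show "(transpose A *v (A *v x)) \<bullet> z = 0" using z by simp
    qed
  qed
  have dW: "d \<in> W" using d W_def by simp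
  define u0 where "u0 = (1 / norm d) *\<^sub>R d"
  have "u0 \<in> sphere 0 1 \<inter> W" using False dW W by (simp add: u0_def subspace_scale)
  then have ne: "sphere 0 1 \<inter> W \<noteq> {}" by blast
  have cpt: "compact (sphere 0 1 \<inter> W)" using W by (simp add: closed_subspace compact_Int_closed)
  have "continuous_on (sphere 0 1 \<inter> W) ?Q"
    by (intro continuous_intros linear_continuous_on matrix_vector_mul_linear)
  then obtain u where u: "u \<in> sphere 0 1 \<inter> W" "\<forall>y\<in>sphere 0 1 \<inter> W. ?Q u \<le> ?Q y"
    using continuous_attains_inf[OF cpt ne] by blast
  define m where "m = ?Q u"
  have uu: "u \<bullet> u = 1" using u(1) power2_norm_eq_inner[of u] by simp
  have bound: "m * (x \<bullet> x) \<le> ?Q x" if "x \<in> W" for x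
  proof (cases "x = 0")
    case False
    define y where "y = (1 / norm x) *\<^sub>R x"
    have "y \<in> sphere 0 1 \<inter> W" using False that W by (simp add: y_def subspace_scale)
    then have "m \<le> ?Q y" using u m_def by blast
    moreover have "?Q y = ?Q x / (norm x)\<^sup>2"
    proof -
      have "A *v y = (1 / norm x) *\<^sub>R (A *v x)" by (simp only: y_def matrix_vector_mult_scaleR)
      then show ?thesis by (simp add: power2_eq_square)
    qed
    ultimately have "m \<le> ?Q x / (norm x)\<^sup>2" by simp
    then have "m * (norm x)\<^sup>2 \<le> ?Q x" using False by (simp add: field_simps)
    then show ?thesis by (simp add: power2_norm_eq_inner)
  qed simp
  have "transpose A *v (A *v u) = m *\<^sub>R u"
    by (rule eig_from_ext[where W=W and s=1]) (use bound uu m_def W inv u in auto)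
  then have me: "m \<in> eigenvalues (transpose A ** A)"
    unfolding eigenvalues_def eig_S using u(1) by (auto intro!: exI[of _ u])
  have mpos: "m > 0"
  proof (rule ccontr)
    assume "\<not> m > 0"
    moreover have "m \<ge> 0" unfolding m_def by simp
    ultimately have "A *v u = 0" unfolding m_def by simp
    then have "u \<bullet> u = 0" using u(1) unfolding W_def by blast
    then show False using uu by simp
  qed
  have "Min {g \<in> eigenvalues (transpose A ** A). g > 0} \<le> m"
    using me mpos finite_eig[of A] by (intro Min_le) auto
  then have "Min {g \<in> eigenvalues (transpose A ** A). g > 0} * (d \<bullet> d) \<le> m * (d \<bullet> d)"
    by (intro mult_right_mono) auto
  also have "\<dots> \<le> ?Q d" using bound dW by blast
  finally show ?thesis .
qed



lemma sum_upper:
  fixes A :: "real^'e^'n" and h ph :: "'n \<Rightarrow> real \<Rightarrow> real"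
  assumes H: "\<And>i y y'. h i y' \<le> h i y + ph i y * (y' - y) + c * (y' - y)\<^sup>2"
  shows "(\<Sum>i\<in>UNIV. h i ((A *v (lam + d)) $ i)) \<le> (\<Sum>i\<in>UNIV. h i ((A *v lam) $ i))
     + (\<chi> i. ph i ((A *v lam) $ i)) \<bullet> (A *v d) + c * ((A *v d) \<bullet> (A *v d))"
proof -
  have "(\<Sum>i\<in>UNIV. h i ((A *v (lam + d)) $ i)) \<le> (\<Sum>i\<in>UNIV. h i ((A *v lam) $ i)
      + ph i ((A *v lam) $ i) * (A *v d) $ i + c * ((A *v d) $ i)\<^sup>2)"
  proof (rule sum_mono)
    fix i
    show "h i ((A *v (lam + d)) $ i) \<le> h i ((A *v lam) $ i) + ph i ((A *v lam) $ i) * (A *v d) $ i + c * ((A *v d) $ i)\<^sup>2"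
      using H[where i=i and y="(A *v lam) $ i" and y'="(A *v (lam + d)) $ i"] by (simp add: matrix_vector_right_distrib)
  qed
  also have "\<dots> = (\<Sum>i\<in>UNIV. h i ((A *v lam) $ i))
     + (\<chi> i. ph i ((A *v lam) $ i)) \<bullet> (A *v d) + c * ((A *v d) \<bullet> (A *v d))"
    by (simp add: sum.distrib inner_vec_def sum_distrib_left power2_eq_square)
  finally show ?thesis .
qed

lemma sum_lower:
  fixes A :: "real^'e^'n" and h ph :: "'n \<Rightarrow> real \<Rightarrow> real"
  assumes H: "\<And>i y y'. h i y' \<ge> h i y + ph i y * (y' - y) + c * (y' - y)\<^sup>2"
  shows "(\<Sum>i\<in>UNIV. h i ((A *v (lam + d)) $ i)) \<ge> (\<Sum>i\<in>UNIV. h i ((A *v lam) $ i))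
     + (\<chi> i. ph i ((A *v lam) $ i)) \<bullet> (A *v d) + c * ((A *v d) \<bullet> (A *v d))"
proof -
  have "(\<Sum>i\<in>UNIV. h i ((A *v (lam + d)) $ i)) \<ge> (\<Sum>i\<in>UNIV. h i ((A *v lam) $ i)
      + ph i ((A *v lam) $ i) * (A *v d) $ i + c * ((A *v d) $ i)\<^sup>2)"
  proof (rule sum_mono)
    fix i
    show "h i ((A *v (lam + d)) $ i) \<ge> h i ((A *v lam) $ i) + ph i ((A *v lam) $ i) * (A *v d) $ i + c * ((A *v d) $ i)\<^sup>2"
      using H[where i=i and y="(A *v lam) $ i" and y'="(A *v (lam + d)) $ i"] by (simp add: matrix_vector_right_distrib)
  qed
  moreover have "(\<Sum>i\<in>UNIV. h i ((A *v lam) $ i)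
      + ph i ((A *v lam) $ i) * (A *v d) $ i + c * ((A *v d) $ i)\<^sup>2) = (\<Sum>i\<in>UNIV. h i ((A *v lam) $ i))
     + (\<chi> i. ph i ((A *v lam) $ i)) \<bullet> (A *v d) + c * ((A *v d) \<bullet> (A *v d))"
    by (simp add: sum.distrib inner_vec_def sum_distrib_left power2_eq_square)
  ultimately show ?thesis by simp
qed

lemma deriv_from_quad:
  fixes g :: "real \<Rightarrow> real"
  assumes lo: "\<And>t. 0 \<le> g t - g 0 - t * D" and up: "\<And>t. g t - g 0 - t * D \<le> C * t\<^sup>2"
  shows "(g has_real_derivative D) (at 0)"
proof -
  have "((\<lambda>y. (g y - g 0) / (y - 0) - D) \<longlongrightarrow> 0) (at 0)"
  proof (rule Lim_null_comparison)
    show "\<forall>\<^sub>F y in at 0. norm ((g y - g 0) / (y - 0) - D) \<le> \<bar>C\<bar> * \<bar>y\<bar>"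
      unfolding eventually_at_filter
    proof (intro always_eventually allI impI)
      fix y :: real assume "y \<noteq> 0"
      then have e: "(g y - g 0) / (y - 0) - D = (g y - g 0 - y * D) / y" by (simp add: field_simps)
      have X0: "0 \<le> g y - g 0 - y * D" by (rule lo)
      have "C * y\<^sup>2 \<le> \<bar>C\<bar> * y\<^sup>2" by (intro mult_right_mono) auto
      then have "g y - g 0 - y * D \<le> \<bar>C\<bar> * y\<^sup>2" using up[of y] by linarith
      moreover have "y\<^sup>2 = \<bar>y\<bar> * \<bar>y\<bar>" by (simp add: power2_eq_square abs_mult_self_eq)
      ultimately have "\<bar>g y - g 0 - y * D\<bar> \<le> \<bar>C\<bar> * \<bar>y\<bar> * \<bar>y\<bar>" using X0 by (simp add: mult.assoc)
      then show "norm ((g y - g 0) / (y - 0) - D) \<le> \<bar>C\<bar> * \<bar>y\<bar>"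
        unfolding e using \<open>y \<noteq> 0\<close> by (simp add: abs_divide divide_le_eq)
    qed
    show "((\<lambda>y. \<bar>C\<bar> * \<bar>y\<bar>) \<longlongrightarrow> 0) (at 0)"
      by (auto intro!: tendsto_eq_intros)
  qed
  then have "((\<lambda>y. (g y - g 0) / (y - 0)) \<longlongrightarrow> D) (at 0)" by (simp add: LIM_zero_iff)
  then show ?thesis by (simp add: has_field_derivative_iff)
qed

lemma double_count:
  fixes ends :: "'e::finite \<Rightarrow> 'n::finite \<times> 'n" and g :: "'e \<Rightarrow> real"
  assumes nl: "\<forall>l. fst (ends l) \<noteq> snd (ends l)"
  shows "(\<Sum>i\<in>UNIV. \<Sum>l\<in>incident_edges ends i. g l) = (\<Sum>l\<in>UNIV. 2 * g l)"
proof -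
  have "(\<Sum>i\<in>UNIV. \<Sum>l\<in>incident_edges ends i. g l) = (\<Sum>i\<in>UNIV. \<Sum>l\<in>UNIV. if i = fst (ends l) \<or> i = snd (ends l) then g l else 0)"
    unfolding incident_edges_def by (simp add: sum.inter_filter[symmetric])
  also have "\<dots> = (\<Sum>l\<in>UNIV. \<Sum>i\<in>UNIV. if i = fst (ends l) \<or> i = snd (ends l) then g l else 0)"
    by (rule sum.swap)
  also have "\<dots> = (\<Sum>l\<in>UNIV. 2 * g l)"
  proof (rule sum.cong[OF refl])
    fix l
    have "(\<Sum>i\<in>UNIV. if i = fst (ends l) \<or> i = snd (ends l) then g l else 0)
        = (\<Sum>i\<in>UNIV. (if i = fst (ends l) then g l else 0) + (if i = snd (ends l) then g l else 0))"
      using nl[rule_format, of l] by (intro sum.cong) auto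
    also have "\<dots> = 2 * g l" by (simp add: sum.distrib)
    finally show "(\<Sum>i\<in>UNIV. if i = fst (ends l) \<or> i = snd (ends l) then g l else 0) = 2 * g l" .
  qed
  finally show ?thesis .
qed

lemma column_norm:
  fixes ends :: "'e::finite \<Rightarrow> 'n::finite \<times> 'n"
  assumes nl: "\<forall>l. fst (ends l) \<noteq> snd (ends l)"
  shows "(incidence ends *v axis l 1) \<bullet> (incidence ends *v axis l 1) = 2"
proof -
  have c: "(incidence ends *v axis l 1) $ i = (if i = fst (ends l) then 1 else if i = snd (ends l) then -1 else 0)" for i
    by (simp add: matrix_vector_mult_basis column_def incidence_def)
  have "(incidence ends *v axis l 1) \<bullet> (incidence ends *v axis l 1)
     = (\<Sum>i\<in>UNIV. (if i = fst (ends l) then 1 else 0) + (if i = snd (ends l) then 1 else 0))"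
    unfolding inner_vec_def c using nl[rule_format, of l] by (intro sum.cong) auto
  also have "\<dots> = 2" by (simp add: sum.distrib)
  finally show ?thesis .
qed



theorem theorem1:
  fixes ends :: "'e::finite \<Rightarrow> 'n::finite \<times> 'n"
    and f :: "'n \<Rightarrow> real \<Rightarrow> real"
    and M mu :: "'n \<Rightarrow> real"
    and F :: "real^'e \<Rightarrow> real"
    and lstar :: "real^'e"
    and x :: "real^'e"
  assumes no_loops: "\<forall>l. fst (ends l) \<noteq> snd (ends l)"
    and simple: "\<forall>l l'. {fst (ends l), snd (ends l)} = {fst (ends l'), snd (ends l')} \<longrightarrow> l = l'"
    and has_nbr: "\<forall>i. incident_edges ends i \<noteq> {}"
    and mu_pos: "\<forall>i. mu i > 0"
    and smooth: "\<forall>i. smooth_with (M i) (f i)"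
    and sconv: "\<forall>i. strongly_convex (mu i) (f i)"
    and F_def: "\<forall>lam. F lam = (\<Sum>i\<in>UNIV. fenchel_conj (f i) ((incidence ends *v lam) $ i))"
    and minimizer: "\<forall>lam. F lstar \<le> F lam"
  shows
    "let A = incidence ends;
         gmax = Max (eigenvalues (transpose A ** A));
         gminp = Min {g \<in> eigenvalues (transpose A ** A). g > 0};
         L = gmax / Min (range mu);
         sigmaA = gminp / Max (range M);
         Nmax = Max (range (\<lambda>i. card (incident_edges ends i)));
         sampling = bind_pmf (pmf_of_set (UNIV :: 'n set)) (\<lambda>i. pmf_of_set (incident_edges ends i))
     in measure_pmf.expectation sampling
          (\<lambda>l. F (x - ((1 / L) * partial_deriv F x l) *\<^sub>R axis l 1)) - F lstar
        \<le> (1 - 2 * sigmaA / (L * real CARD('n) * real Nmax)) * (F x - F lstar)"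
proof -
  define A where "A = incidence ends"
  define gmax where "gmax = Max (eigenvalues (transpose A ** A))"
  define gminp where "gminp = Min {g \<in> eigenvalues (transpose A ** A). g > 0}"
  define mumin where "mumin = Min (range mu)"
  define Mmax where "Mmax = Max (range M)"
  define L where "L = gmax / mumin"
  define sigmaA where "sigmaA = gminp / Mmax"
  define N where "N i = card (incident_edges ends i)" for i
  define Nmax where "Nmax = Max (range N)"
  define S where "S i = incident_edges ends i" for i
  define n where "n = real CARD('n)"
  define h where "h i = fenchel_conj (f i)" for i
  define ph where "ph i = phi (f i)" for i
  define P where "P lam = (\<chi> i. ph i ((A *v lam) $ i))" for lam
  define G where "G = transpose A *v P x"
  have npos: "n > 0" unfolding n_def by simp
  have Sfin: "finite (S i)" for i by simp
  have Sne: "S i \<noteq> {}" for i unfolding S_def using has_nbr by blast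
  have Npos: "N i > 0" for i unfolding N_def S_def[symmetric] using Sfin Sne by (simp add: card_gt_0_iff)
  have NNmax: "N i \<le> Nmax" for i unfolding Nmax_def by (rule Max_ge) auto
  have Nmaxpos: "real Nmax > 0" using Npos[of undefined] NNmax[of undefined] by simp
  have mumin_le: "mumin \<le> mu i" for i unfolding mumin_def by (rule Min_le) auto
  have mumin_pos: "mumin > 0"
  proof -
    have "mumin \<in> range mu" unfolding mumin_def by (rule Min_in) auto
    then show ?thesis using mu_pos by auto
  qed
  have Mi_pos: "M i > 0" for i using Mpos[OF smooth[rule_format] sconv[rule_format] mu_pos[rule_format]] .
  have M_le: "M i \<le> Mmax" for i unfolding Mmax_def by (rule Max_ge) auto
  have Mmax_pos: "Mmax > 0" using Mi_pos[of undefined] M_le[of undefined] by simp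
  obtain l0 where "l0 \<in> incident_edges ends undefined" using has_nbr by blast
  obtain R where R: "R \<in> eigenvalues (transpose A ** A)" "\<forall>v. (A *v v) \<bullet> (A *v v) \<le> R * (v \<bullet> v)"
    using top_eig[of A] by blast
  have "(A *v axis l0 1) \<bullet> (A *v axis l0 1) = 2" unfolding A_def using column_norm[OF no_loops] .
  then have R2: "R \<ge> 2" using R(2)[rule_format, of "axis l0 1"] by (simp add: inner_axis_axis)
  have gmax2: "gmax \<ge> 2"
  proof -
    have "R \<le> gmax" unfolding gmax_def using R(1) finite_eig[of A] by (intro Max_ge)
    then show ?thesis using R2 by simp
  qed
  have Lpos: "L > 0" unfolding L_def using gmax2 mumin_pos by simp
  have Lmu: "L * mumin = gmax" unfolding L_def using mumin_pos by simp
  have gminp_pos: "gminp > 0"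
  proof -
    have "gminp \<in> {g \<in> eigenvalues (transpose A ** A). g > 0}" unfolding gminp_def
      using finite_eig[of A] R(1) R2 by (intro Min_in) auto
    then show ?thesis by simp
  qed
  have sigma_pos: "sigmaA > 0" unfolding sigmaA_def using gminp_pos Mmax_pos by simp
  have Fh: "F lam = (\<Sum>i\<in>UNIV. h i ((A *v lam) $ i))" for lam
    unfolding h_def A_def using F_def by simp
  have up1: "h i y' \<le> h i y + ph i y * (y' - y) + 1 / (2 * mumin) * (y' - y)\<^sup>2" for i y y'
  proof -
    have "h i y' \<le> h i y + ph i y * (y' - y) + (y' - y)\<^sup>2 / (2 * mu i)"
      unfolding h_def ph_def by (rule conj_upper[OF smooth[rule_format] sconv[rule_format] mu_pos[rule_format]])
    also have "(y' - y)\<^sup>2 / (2 * mu i) \<le> (y' - y)\<^sup>2 / (2 * mumin)"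
      using mumin_le[of i] mumin_pos by (intro divide_left_mono) auto
    finally show ?thesis by simp
  qed
  have lo1: "h i y' \<ge> h i y + ph i y * (y' - y) + 1 / (2 * Mmax) * (y' - y)\<^sup>2" for i y y'
  proof -
    have "h i y' \<ge> h i y + ph i y * (y' - y) + (y' - y)\<^sup>2 / (2 * Mmax)"
      unfolding h_def ph_def by (rule conj_lower[OF smooth[rule_format] sconv[rule_format] mu_pos[rule_format] M_le])
    then show ?thesis by simp
  qed
  have PG: "P x \<bullet> (A *v d) = G \<bullet> d" for d
    unfolding G_def using inner_transp[of A d "P x"] by (simp only: inner_commute)
  have Fup: "F (x + d) \<le> F x + G \<bullet> d + 1 / (2 * mumin) * ((A *v d) \<bullet> (A *v d))" for d
    unfolding Fh PG[symmetric] P_def using sum_upper[of h ph, OF up1] .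
  have Flo: "F (x + d) \<ge> F x + G \<bullet> d + 1 / (2 * Mmax) * ((A *v d) \<bullet> (A *v d))" for d
    unfolding Fh PG[symmetric] P_def using sum_lower[of h ph, OF lo1] .
  have col: "(A *v (t *\<^sub>R axis l 1)) \<bullet> (A *v (t *\<^sub>R axis l 1)) = 2 * t\<^sup>2" for t l
  proof -
    have "(A *v axis l 1) \<bullet> (A *v axis l 1) = 2" unfolding A_def using column_norm[OF no_loops] .
    then show ?thesis by (simp add: matrix_vector_mult_scaleR power2_eq_square)
  qed
  have Gax: "G \<bullet> (t *\<^sub>R axis l 1) = t * G $ l" for t l by (simp add: inner_axis)
  have cup: "F (x + t *\<^sub>R axis l 1) \<le> F x + t * G $ l + t\<^sup>2 / mumin" for t l
    using Fup[of "t *\<^sub>R axis l 1"] unfolding col Gax by simp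
  have clo: "F (x + t *\<^sub>R axis l 1) \<ge> F x + t * G $ l" for t l
  proof -
    have "0 \<le> 1 / (2 * Mmax) * (2 * t\<^sup>2)" using Mmax_pos by simp
    then show ?thesis using Flo[of "t *\<^sub>R axis l 1"] unfolding col Gax by linarith
  qed
  have pd: "partial_deriv F x l = G $ l" for l
  proof -
    have "((\<lambda>t. F (x + t *\<^sub>R axis l 1)) has_real_derivative G $ l) (at 0)"
    proof (rule deriv_from_quad[where C = "1 / mumin"])
      fix t
      show "0 \<le> F (x + t *\<^sub>R axis l 1) - F (x + 0 *\<^sub>R axis l 1) - t * G $ l" using clo[of t l] by simp
      show "F (x + t *\<^sub>R axis l 1) - F (x + 0 *\<^sub>R axis l 1) - t * G $ l \<le> 1 / mumin * t\<^sup>2"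
        using cup[of t l] by simp
    qed
    then show ?thesis unfolding partial_deriv_def by (rule DERIV_imp_deriv)
  qed
  define Phi where "Phi l = F (x - ((1 / L) * partial_deriv F x l) *\<^sub>R axis l 1)" for l
  have step: "Phi l \<le> F x - (G $ l)\<^sup>2 / (2 * L)" for l
  proof -
    define t where "t = - (G $ l / L)"
    have "Phi l = F (x + t *\<^sub>R axis l 1)" unfolding Phi_def pd t_def
      by (simp add: algebra_simps)
    also have "\<dots> \<le> F x + t * G $ l + t\<^sup>2 / mumin" by (rule cup)
    also have "t * G $ l = - (G $ l)\<^sup>2 / L" unfolding t_def by (simp add: power2_eq_square)
    also have "t\<^sup>2 / mumin = (G $ l)\<^sup>2 / (L * gmax)"
      unfolding t_def Lmu[symmetric] using Lpos mumin_pos by (simp add: power2_eq_square field_simps)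
    also have "(G $ l)\<^sup>2 / (L * gmax) \<le> (G $ l)\<^sup>2 / (L * 2)"
      using Lpos gmax2 by (intro divide_left_mono mult_left_mono) auto
    finally show ?thesis by (simp add: field_simps)
  qed
  define E where "E = measure_pmf.expectation (bind_pmf (pmf_of_set (UNIV :: 'n set)) (\<lambda>i. pmf_of_set (incident_edges ends i))) Phi"
  have Eeq: "E = (\<Sum>i\<in>UNIV. (sum Phi (S i) / real (N i)) / n)"
  proof -
    have "E = (\<Sum>i\<in>UNIV. measure_pmf.expectation (pmf_of_set (S i)) Phi /\<^sub>R real (card (UNIV :: 'n set)))"
      unfolding E_def S_def using Sne Sfin unfolding S_def
      by (intro pmf_expectation_bind_pmf_of_set) auto
    also have "\<dots> = (\<Sum>i\<in>UNIV. (sum Phi (S i) / real (N i)) / n)"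
      using Sne Sfin by (intro sum.cong) (auto simp: integral_pmf_of_set n_def N_def S_def divide_inverse_commute)
    finally show ?thesis .
  qed
  define Qs where "Qs i = (\<Sum>l\<in>S i. (G $ l)\<^sup>2)" for i
  have Qs0: "Qs i \<ge> 0" for i unfolding Qs_def by (intro sum_nonneg) auto
  have per: "sum Phi (S i) / real (N i) \<le> F x - Qs i / (2 * L * real Nmax)" for i
  proof -
    have "sum Phi (S i) \<le> (\<Sum>l\<in>S i. F x - (G $ l)\<^sup>2 / (2 * L))" by (intro sum_mono step)
    also have "\<dots> = real (N i) * F x - Qs i / (2 * L)"
      unfolding Qs_def N_def S_def by (simp add: sum_subtractf sum_divide_distrib)
    finally have "sum Phi (S i) / real (N i) \<le> (real (N i) * F x - Qs i / (2 * L)) / real (N i)"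
      using Npos[of i] by (intro divide_right_mono) auto
    also have "\<dots> = F x - Qs i / (2 * L * real (N i))" using Npos[of i] by (simp add: field_simps)
    finally have a: "sum Phi (S i) / real (N i) \<le> F x - Qs i / (2 * L * real (N i))" .
    have "Qs i / (2 * L * real (N i)) \<ge> Qs i / (2 * L * real Nmax)"
      using Npos[of i] NNmax[of i] Lpos Qs0[of i] by (intro divide_left_mono mult_left_mono) auto
    with a show ?thesis by linarith
  qed
  have GG: "(\<Sum>i\<in>UNIV. Qs i) = 2 * (G \<bullet> G)"
    unfolding Qs_def S_def using double_count[OF no_loops, of "\<lambda>l. (G $ l)\<^sup>2"]
    by (simp add: inner_vec_def sum_distrib_left power2_eq_square)
  have Ebound: "E \<le> F x - (G \<bullet> G) / (L * n * real Nmax)"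
  proof -
    have "E \<le> (\<Sum>i\<in>UNIV. (F x - Qs i / (2 * L * real Nmax)) / n)"
      unfolding Eeq using npos by (intro sum_mono divide_right_mono per) auto
    also have "\<dots> = F x - (\<Sum>i\<in>UNIV. Qs i) / (2 * L * real Nmax * n)"
      using npos by (simp add: sum_divide_distrib[symmetric] sum_subtractf n_def field_simps)
    also have "\<dots> = F x - (G \<bullet> G) / (L * n * real Nmax)"
      unfolding GG using Lpos npos Nmaxpos by (simp add: field_simps)
    finally show ?thesis .
  qed
  have PL: "2 * sigmaA * (F x - F lstar) \<le> G \<bullet> G"
  proof -
    define NS where "NS = {v :: real^'e. A *v v = 0}"
    have NSsub: "subspace NS" unfolding NS_def subspace_def
      by (simp add: matrix_vector_right_distrib matrix_vector_mult_scaleR)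
    obtain y z where yz: "y \<in> span NS" "\<And>w. w \<in> span NS \<Longrightarrow> orthogonal z w" "lstar - x = y + z"
      using orthogonal_subspace_decomp_exists[of NS "lstar - x"] by blast
    have spNS: "span NS = NS" using NSsub by (rule span_eq_iff[THEN iffD2])
    have "y \<in> NS" using yz(1) spNS by simp
    then have Ay: "A *v y = 0" unfolding NS_def by simp
    have Az: "A *v (lstar - x) = A *v z" using yz(3) Ay by (simp add: matrix_vector_right_distrib)
    have zperp: "\<forall>v. A *v v = 0 \<longrightarrow> z \<bullet> v = 0"
    proof (intro allI impI)
      fix v assume "A *v v = 0"
      then have "v \<in> NS" unfolding NS_def by simp
      then have "v \<in> span NS" by (rule span_base)
      then show "z \<bullet> v = 0" using yz(2) unfolding orthogonal_def by blast
    qed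
    have eigb: "(A *v z) \<bullet> (A *v z) \<ge> gminp * (z \<bullet> z)"
      unfolding gminp_def by (rule pos_eig_bound[OF zperp])
    have PGl: "G \<bullet> (lstar - x) = G \<bullet> z" using PG[of "lstar - x"] PG[of z] Az by simp
    have "F lstar \<ge> F x + G \<bullet> z + 1 / (2 * Mmax) * ((A *v z) \<bullet> (A *v z))"
      using Flo[of "lstar - x"] unfolding PGl Az by simp
    moreover have "G \<bullet> z \<ge> - (norm G * norm z)"
      using norm_cauchy_schwarz[of "-G" z] by simp
    moreover have "1 / (2 * Mmax) * ((A *v z) \<bullet> (A *v z)) \<ge> 1 / (2 * Mmax) * (gminp * (z \<bullet> z))"
      using eigb Mmax_pos by (intro mult_left_mono) auto
    moreover have "1 / (2 * Mmax) * (gminp * (z \<bullet> z)) = sigmaA * (norm z)\<^sup>2 / 2"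
      unfolding sigmaA_def power2_norm_eq_inner by simp
    ultimately have D: "F x - F lstar \<le> norm G * norm z - sigmaA * (norm z)\<^sup>2 / 2" by linarith
    have "2 * sigmaA * (F x - F lstar) \<le> 2 * sigmaA * (norm G * norm z - sigmaA * (norm z)\<^sup>2 / 2)"
      using D sigma_pos by (intro mult_left_mono) auto
    also have "\<dots> = (norm G)\<^sup>2 - (norm G - sigmaA * norm z)\<^sup>2"
      by (simp add: power2_eq_square algebra_simps)
    also have "\<dots> \<le> (norm G)\<^sup>2" by simp
    also have "\<dots> = G \<bullet> G" by (rule power2_norm_eq_inner)
    finally show ?thesis .
  qed
  have final: "E - F lstar \<le> (1 - 2 * sigmaA / (L * n * real Nmax)) * (F x - F lstar)"
  proof -
    have K: "L * n * real Nmax > 0" using Lpos npos Nmaxpos by simp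
    have "2 * sigmaA * (F x - F lstar) / (L * n * real Nmax) \<le> (G \<bullet> G) / (L * n * real Nmax)"
      using PL K by (intro divide_right_mono) auto
    then show ?thesis using Ebound by (simp add: algebra_simps)
  qed
  show ?thesis
    using final unfolding Let_def E_def Phi_def
    unfolding n_def Nmax_def N_def sigmaA_def L_def gminp_def gmax_def mumin_def Mmax_def A_def .
qed

end
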